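(* Let $G$ be a profinite group and $X$ a scattered profinite $G$-space of finite Cantor–Bendixson rank $n$, such that each $x\in X$ has a neighbourhood basis $\mathcal{B}_x$ consisting of $\mathrm{stab}_G(x)$-invariant open sets. Let $0\to\mathrm{const}\,\mathbb{Q}\xrightarrow{\delta_0}I^0\xrightarrow{\delta_1}I^1\xrightarrow{\delta_2}\cdots$ be the equivariant Godement resolution of the constant sheaf $\mathrm{const}\,\mathbb{Q}$ (with $I^{-1}=\mathrm{const}\,\mathbb{Q}$). Then for every $x\in X$, every $U\in\mathcal{B}_x$ and every $i<\mathrm{ht}(x)$, the cokernel of $\delta_i(U)\colon I^{i-1}(U)\to I^i(U)$ contains a nonzero element represented by a $\mathrm{stab}_G(x)$-invariant section of $I^i$ over $U$.
   Context: A profinite $G$-space is a compact Hausdorff totally disconnected space with continuous $G$-action. $G$-equivariant sheaves of $\mathbb{Q}$-modules over $X$: sheaf spaces of $\mathbb{Q}$-modules $p\colon E\to X$ with continuous $G$-action making $p$ equivariant and stalk maps linear. $\mathrm{const}\,\mathbb{Q}$ is the constant sheaf with stalk $\mathbb{Q}$ and trivial action. For a $G$-sheaf $F$, $I^0(F)=\prod_A i_{A*}(F|_A)$ (product over $G$-orbits $A$, $i_{A*}$ extension by zero), $\delta_F\colon F\to I^0(F)$ the canonical monomorphism; the equivariant Godement resolution of $E$ has $C^0=E$, $I^k=I^0(C^k)$, $C^{k+1}=\mathrm{coker}(\delta_{C^k})$, and differentials the composites $I^{k}\to C^{k+1}\to I^{k+1}$. Cantor–Bendixson process, rank, scattered: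 as usual ($X^{(\alpha+1)}$ removes isolated points of $X^{(\alpha)}$, intersections at limits); $\mathrm{ht}(x)=\kappa$ with $x\in X^{(\kappa)}\setminus X^{(\kappa+1)}$. $F(U)$ denotes sections over $U$. *)

theory Defs
  imports "HOL-Analysis.Analysis" "HOL-Algebra.Group"
begin

definition totally_disconnected_space :: "'a topology \<Rightarrow> bool" where
  "totally_disconnected_space T \<longleftrightarrow>
     (\<forall>S. S \<subseteq> topspace T \<and> connectedin T S \<longrightarrow> S = {} \<or> (\<exists>a. S = {a}))"

definition profinite_space :: "'a topology \<Rightarrow> bool" where
  "profinite_space T \<longleftrightarrow> compact_space T \<and> Hausdorff_space T \<and> totally_disconnected_space T"

definition profinite_group :: "('g, 'b) monoid_scheme \<Rightarrow> 'g topology \<Rightarrow> bool" where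
  "profinite_group G TG \<longleftrightarrow> group G \<and> topspace TG = carrier G \<and> profinite_space TG \<and>
     continuous_map (prod_topology TG TG) TG (\<lambda>(a,b). a \<otimes>\<^bsub>G\<^esub> b) \<and>
     continuous_map TG TG (\<lambda>a. inv\<^bsub>G\<^esub> a)"

definition cont_action :: "('g, 'b) monoid_scheme \<Rightarrow> 'g topology \<Rightarrow> 'x topology \<Rightarrow> ('g \<Rightarrow> 'x \<Rightarrow> 'x) \<Rightarrow> bool" where
  "cont_action G TG X act \<longleftrightarrow>
     continuous_map (prod_topology TG X) X (\<lambda>(g,x). act g x) \<and>
     (\<forall>x\<in>topspace X. act \<one>\<^bsub>G\<^esub> x = x) \<and>
     (\<forall>g\<in>carrier G. \<forall>h\<in>carrier G. \<forall>x\<in>topspace X. act (g \<otimes>\<^bsub>G\<^esub> h) x = act g (act h x))"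

definition stab :: "('g, 'b) monoid_scheme \<Rightarrow> ('g \<Rightarrow> 'x \<Rightarrow> 'x) \<Rightarrow> 'x \<Rightarrow> 'g set" where
  "stab G act x = {g \<in> carrier G. act g x = x}"

definition orbits :: "('g, 'b) monoid_scheme \<Rightarrow> 'x topology \<Rightarrow> ('g \<Rightarrow> 'x \<Rightarrow> 'x) \<Rightarrow> 'x set set" where
  "orbits G X act = {(\<lambda>g. act g x) ` carrier G | x. x \<in> topspace X}"

fun cb_deriv :: "'x topology \<Rightarrow> nat \<Rightarrow> 'x set" where
  "cb_deriv X 0 = topspace X"
| "cb_deriv X (Suc k) = {x \<in> cb_deriv X k. \<not> openin (subtopology X (cb_deriv X k)) {x}}"

text \<open>Height of a point (for spaces of finite Cantor--Bendixson rank).\<close>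
definition ht :: "'x topology \<Rightarrow> 'x \<Rightarrow> nat" where
  "ht X x = (THE k. x \<in> cb_deriv X k \<and> x \<notin> cb_deriv X (Suc k))"

record ('x, 'g, 'e) gsheaf =
  tot  :: "'e topology"
  proj :: "'e \<Rightarrow> 'x"
  zer  :: "'x \<Rightarrow> 'e"
  add  :: "'e \<Rightarrow> 'e \<Rightarrow> 'e"
  smul :: "rat \<Rightarrow> 'e \<Rightarrow> 'e"
  gact :: "'g \<Rightarrow> 'e \<Rightarrow> 'e"

definition local_homeo :: "'e topology \<Rightarrow> 'x topology \<Rightarrow> ('e \<Rightarrow> 'x) \<Rightarrow> bool" where
  "local_homeo E X p \<longleftrightarrow> continuous_map E X p \<and>
     (\<forall>e\<in>topspace E. \<exists>V. openin E V \<and> e \<in> V \<and> openin X (p ` V) \<and>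
        homeomorphic_map (subtopology E V) (subtopology X (p ` V)) p)"

definition is_gsheaf :: "('g, 'b) monoid_scheme \<Rightarrow> 'g topology \<Rightarrow> 'x topology \<Rightarrow> ('g \<Rightarrow> 'x \<Rightarrow> 'x)
    \<Rightarrow> ('x, 'g, 'e) gsheaf \<Rightarrow> bool" where
  "is_gsheaf G TG X act F \<longleftrightarrow>
     (let E = topspace (tot F); p = proj F; stalk = (\<lambda>x. {e \<in> E. p e = x}) in
     local_homeo (tot F) X p \<and>
     continuous_map X (tot F) (zer F) \<and> (\<forall>x\<in>topspace X. zer F x \<in> stalk x) \<and>
     continuous_map (subtopology (prod_topology (tot F) (tot F)) {(a,b). a \<in> E \<and> b \<in> E \<and> p a = p b})
        (tot F) (\<lambda>(a,b). add F a b) \<and>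
     (\<forall>q. continuous_map (tot F) (tot F) (smul F q)) \<and>
     (\<forall>x\<in>topspace X. \<forall>a\<in>stalk x. \<forall>b\<in>stalk x. add F a b \<in> stalk x) \<and>
     (\<forall>x\<in>topspace X. \<forall>a\<in>stalk x. \<forall>q. smul F q a \<in> stalk x) \<and>
     \<comment> \<open>each stalk is a Q-vector space\<close>
     (\<forall>x\<in>topspace X. \<forall>a\<in>stalk x. \<forall>b\<in>stalk x. \<forall>c\<in>stalk x.
         add F (add F a b) c = add F a (add F b c) \<and> add F a b = add F b a \<and>
         add F (zer F x) a = a \<and> add F a (smul F (-1) a) = zer F x \<and>
         (\<forall>q r. smul F q (add F a b) = add F (smul F q a) (smul F q b) \<and>
                smul F (q + r) a = add F (smul F q a) (smul F r a) \<and>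
                smul F (q * r) a = smul F q (smul F r a)) \<and>
         smul F 1 a = a) \<and>
     \<comment> \<open>continuous G-action, p equivariant, stalk maps linear\<close>
     continuous_map (prod_topology TG (tot F)) (tot F) (\<lambda>(g,e). gact F g e) \<and>
     (\<forall>g\<in>carrier G. \<forall>e\<in>E. p (gact F g e) = act g (p e)) \<and>
     (\<forall>e\<in>E. gact F \<one>\<^bsub>G\<^esub> e = e) \<and>
     (\<forall>g\<in>carrier G. \<forall>h\<in>carrier G. \<forall>e\<in>E. gact F (g \<otimes>\<^bsub>G\<^esub> h) e = gact F g (gact F h e)) \<and>
     (\<forall>g\<in>carrier G. \<forall>x\<in>topspace X. \<forall>a\<in>stalk x. \<forall>b\<in>stalk x.
         gact F g (add F a b) = add F (gact F g a) (gact F g b) \<and>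
         (\<forall>q. gact F g (smul F q a) = smul F q (gact F g a))))"

definition gsheaf_mor :: "('g, 'b) monoid_scheme \<Rightarrow> ('x, 'g, 'e) gsheaf \<Rightarrow> ('x, 'g, 'f) gsheaf
    \<Rightarrow> ('e \<Rightarrow> 'f) \<Rightarrow> bool" where
  "gsheaf_mor G F F' f \<longleftrightarrow>
     continuous_map (tot F) (tot F') f \<and>
     (\<forall>e\<in>topspace (tot F). proj F' (f e) = proj F e) \<and>
     (\<forall>a\<in>topspace (tot F). \<forall>b\<in>topspace (tot F). proj F a = proj F b \<longrightarrow>
         f (add F a b) = add F' (f a) (f b)) \<and>
     (\<forall>a\<in>topspace (tot F). \<forall>q. f (smul F q a) = smul F' q (f a)) \<and>
     (\<forall>g\<in>carrier G. \<forall>a\<in>topspace (tot F). f (gact F g a) = gact F' g (f a))"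

definition gsheaf_iso :: "('g, 'b) monoid_scheme \<Rightarrow> ('x, 'g, 'e) gsheaf \<Rightarrow> ('x, 'g, 'f) gsheaf \<Rightarrow> bool" where
  "gsheaf_iso G F F' \<longleftrightarrow> (\<exists>f h. gsheaf_mor G F F' f \<and> gsheaf_mor G F' F h \<and>
      (\<forall>e\<in>topspace (tot F). h (f e) = e) \<and> (\<forall>e\<in>topspace (tot F'). f (h e) = e))"

definition constQ :: "'x topology \<Rightarrow> ('g \<Rightarrow> 'x \<Rightarrow> 'x) \<Rightarrow> ('x, 'g, 'x \<times> rat) gsheaf" where
  "constQ X act = \<lparr> tot = prod_topology X (discrete_topology UNIV), proj = fst,
     zer = (\<lambda>x. (x, 0)), add = (\<lambda>(x,a) (y,b). (x, a + b)), smul = (\<lambda>q (x,a). (x, q * a)),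
     gact = (\<lambda>g (x,a). (act g x, a)) \<rparr>"

definition sections :: "'x topology \<Rightarrow> ('x, 'g, 'e) gsheaf \<Rightarrow> 'x set \<Rightarrow> ('x \<Rightarrow> 'e) set" where
  "sections X F S = {s. continuous_map (subtopology X S) (tot F) s \<and>
       (\<forall>y\<in>S. proj F (s y) = y) \<and> (\<forall>y. y \<notin> S \<longrightarrow> s y = undefined)}"

definition sec_act :: "('g, 'b) monoid_scheme \<Rightarrow> ('g \<Rightarrow> 'x \<Rightarrow> 'x) \<Rightarrow> ('x, 'g, 'e) gsheaf
    \<Rightarrow> 'g \<Rightarrow> 'x set \<Rightarrow> ('x \<Rightarrow> 'e) \<Rightarrow> ('x \<Rightarrow> 'e)" where
  "sec_act G act F g S s = (\<lambda>y. if y \<in> act g ` S then gact F g (s (act (inv\<^bsub>G\<^esub> g) y)) else undefined)"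

definition sec_map :: "('e \<Rightarrow> 'f) \<Rightarrow> 'x set \<Rightarrow> ('x \<Rightarrow> 'e) \<Rightarrow> ('x \<Rightarrow> 'f)" where
  "sec_map f S s = (\<lambda>y. if y \<in> S then f (s y) else undefined)"

definition sec_add :: "('x, 'g, 'e) gsheaf \<Rightarrow> 'x set \<Rightarrow> ('x \<Rightarrow> 'e) \<Rightarrow> ('x \<Rightarrow> 'e) \<Rightarrow> ('x \<Rightarrow> 'e)" where
  "sec_add F S s t = (\<lambda>y. if y \<in> S then add F (s y) (t y) else undefined)"

definition sec_smul :: "('x, 'g, 'e) gsheaf \<Rightarrow> 'x set \<Rightarrow> rat \<Rightarrow> ('x \<Rightarrow> 'e) \<Rightarrow> ('x \<Rightarrow> 'e)" where
  "sec_smul F S q s = (\<lambda>y. if y \<in> S then smul F q (s y) else undefined)"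

text \<open>Sections of prod_A i_{A*}(F|_A) over U: families indexed by the G-orbits A of sections
  of F|_A over U \<inter> A.\<close>
definition I0_sections :: "('g, 'b) monoid_scheme \<Rightarrow> 'x topology \<Rightarrow> ('g \<Rightarrow> 'x \<Rightarrow> 'x)
    \<Rightarrow> ('x, 'g, 'e) gsheaf \<Rightarrow> 'x set \<Rightarrow> ('x set \<Rightarrow> 'x \<Rightarrow> 'e) set" where
  "I0_sections G X act F U = {t. (\<forall>A\<in>orbits G X act. t A \<in> sections X F (U \<inter> A)) \<and>
       (\<forall>A. A \<notin> orbits G X act \<longrightarrow> t A = undefined)}"

text \<open>(I, delta) is (a realisation of) I^0(F) with its canonical monomorphism delta_F:
  the sections of I are identified, naturally in U, linearly and G-equivariantly, with the
  sections of prod_A i_{A*}(F|_A), and delta_F acts on sections by restriction to the orbits.\<close>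
definition is_I0 :: "('g, 'b) monoid_scheme \<Rightarrow> 'g topology \<Rightarrow> 'x topology \<Rightarrow> ('g \<Rightarrow> 'x \<Rightarrow> 'x)
    \<Rightarrow> ('x, 'g, 'e) gsheaf \<Rightarrow> ('x, 'g, 'e) gsheaf \<Rightarrow> ('e \<Rightarrow> 'e) \<Rightarrow> bool" where
  "is_I0 G TG X act F I \<delta> \<longleftrightarrow>
     is_gsheaf G TG X act I \<and> gsheaf_mor G F I \<delta> \<and>
     (\<exists>\<Phi>. \<forall>U. openin X U \<longrightarrow>
        bij_betw (\<Phi> U) (sections X I U) (I0_sections G X act F U) \<and>
        (\<forall>s\<in>sections X F U. \<Phi> U (sec_map \<delta> U s) =
            (\<lambda>A. if A \<in> orbits G X act then restrict s (U \<inter> A) else undefined)) \<and>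
        (\<forall>V t. openin X V \<and> V \<subseteq> U \<and> t \<in> sections X I U \<longrightarrow>
            \<Phi> V (restrict t V) =
            (\<lambda>A. if A \<in> orbits G X act then restrict (\<Phi> U t A) (V \<inter> A) else undefined)) \<and>
        (\<forall>t1\<in>sections X I U. \<forall>t2\<in>sections X I U. \<Phi> U (sec_add I U t1 t2) =
            (\<lambda>A. if A \<in> orbits G X act then sec_add F (U \<inter> A) (\<Phi> U t1 A) (\<Phi> U t2 A) else undefined)) \<and>
        (\<forall>t\<in>sections X I U. \<forall>q. \<Phi> U (sec_smul I U q t) =
            (\<lambda>A. if A \<in> orbits G X act then sec_smul F (U \<inter> A) q (\<Phi> U t A) else undefined)) \<and>
        (\<forall>g\<in>carrier G. \<forall>t\<in>sections X I U. \<Phi> (act g ` U) (sec_act G act I g U t) =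
            (\<lambda>A. if A \<in> orbits G X act then sec_act G act F g (U \<inter> A) (\<Phi> U t A) else undefined)))"

text \<open>(C, q) is a cokernel of the sheaf morphism f : F \<rightarrow> F' (computed stalkwise).\<close>
definition is_cokernel :: "('g, 'b) monoid_scheme \<Rightarrow> 'g topology \<Rightarrow> 'x topology \<Rightarrow> ('g \<Rightarrow> 'x \<Rightarrow> 'x)
    \<Rightarrow> ('x, 'g, 'e) gsheaf \<Rightarrow> ('x, 'g, 'e) gsheaf \<Rightarrow> ('e \<Rightarrow> 'e)
    \<Rightarrow> ('x, 'g, 'e) gsheaf \<Rightarrow> ('e \<Rightarrow> 'e) \<Rightarrow> bool" where
  "is_cokernel G TG X act F F' f C q \<longleftrightarrow>
     is_gsheaf G TG X act C \<and> gsheaf_mor G F' C q \<and>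
     q ` topspace (tot F') = topspace (tot C) \<and>
     (\<forall>e\<in>topspace (tot F'). q e = zer C (proj F' e) \<longleftrightarrow> (\<exists>e0\<in>topspace (tot F). f e0 = e))"

text \<open>Equivariant Godement resolution of E: C^0 = E, I^k = I^0(C^k) with delta_k = delta_{C^k},
  C^{k+1} = coker(delta_k) with quotient map q_k : I^k \<rightarrow> C^{k+1}.
  The differentials are d_0 = delta_0 and d_{k+1} = delta_{k+1} \<circ> q_k.\<close>
definition godement_resolution :: "('g, 'b) monoid_scheme \<Rightarrow> 'g topology \<Rightarrow> 'x topology \<Rightarrow> ('g \<Rightarrow> 'x \<Rightarrow> 'x)
    \<Rightarrow> ('x, 'g, 'e) gsheaf \<Rightarrow> (nat \<Rightarrow> ('x, 'g, 'e) gsheaf) \<Rightarrow> (nat \<Rightarrow> ('x, 'g, 'e) gsheaf)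
    \<Rightarrow> (nat \<Rightarrow> 'e \<Rightarrow> 'e) \<Rightarrow> (nat \<Rightarrow> 'e \<Rightarrow> 'e) \<Rightarrow> bool" where
  "godement_resolution G TG X act E C I \<delta> q \<longleftrightarrow>
     C 0 = E \<and> is_gsheaf G TG X act E \<and>
     (\<forall>k. is_I0 G TG X act (C k) (I k) (\<delta> k)) \<and>
     (\<forall>k. is_cokernel G TG X act (C k) (I k) (\<delta> k) (C (Suc k)) (q k))"

text \<open>Source I^{i-1} (with I^{-1} = E) and differential delta_i : I^{i-1} \<rightarrow> I^i.\<close>
definition res_src :: "(nat \<Rightarrow> ('x, 'g, 'e) gsheaf) \<Rightarrow> (nat \<Rightarrow> ('x, 'g, 'e) gsheaf) \<Rightarrow> nat \<Rightarrow> ('x, 'g, 'e) gsheaf" where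
  "res_src C I i = (if i = 0 then C 0 else I (i - 1))"

definition res_diff :: "(nat \<Rightarrow> 'e \<Rightarrow> 'e) \<Rightarrow> (nat \<Rightarrow> 'e \<Rightarrow> 'e) \<Rightarrow> nat \<Rightarrow> 'e \<Rightarrow> 'e" where
  "res_diff \<delta> q i = (if i = 0 then \<delta> 0 else \<delta> i \<circ> q (i - 1))"

end

theory Submission
  imports Defs
begin


section \<open>Cantor-Bendixson lemmas\<close>

lemma cb_deriv_subset_top: "cb_deriv X k \<subseteq> topspace X"
  by (induction k) auto

lemma cb_deriv_Suc_sub: "cb_deriv X (Suc k) \<subseteq> cb_deriv X k"
  by auto

lemma cb_deriv_antimono: "k \<le> m \<Longrightarrow> cb_deriv X m \<subseteq> cb_deriv X k"
proof (induction m)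
  case 0 then show ?case by simp
next
  case (Suc m)
  then show ?case
    by (metis cb_deriv_Suc_sub le_Suc_eq order.refl order_trans)
qed

lemma cb_deriv_inj_map:
  assumes f: "continuous_map X X f" and inj: "inj_on f (topspace X)"
  shows "w \<in> cb_deriv X k \<Longrightarrow> f w \<in> cb_deriv X k"
proof (induction k arbitrary: w)
  case 0
  then show ?case using f by (auto simp: continuous_map_def)
next
  case (Suc k)
  then have wk: "w \<in> cb_deriv X k" and nw: "\<not> openin (subtopology X (cb_deriv X k)) {w}" by auto
  have fwk: "f w \<in> cb_deriv X k" using Suc.IH wk by blast
  show ?case
  proof (rule ccontr)
    assume "f w \<notin> cb_deriv X (Suc k)"
    then have "openin (subtopology X (cb_deriv X k)) {f w}" using fwk by auto
    then obtain Ob where Ob: "openin X Ob" "{f w} = Ob \<inter> cb_deriv X k"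
      by (auto simp: openin_subtopology)
    define Ob' where "Ob' = {x \<in> topspace X. f x \<in> Ob}"
    have "openin X Ob'" unfolding Ob'_def using openin_continuous_map_preimage[OF f Ob(1)] .
    moreover have "Ob' \<inter> cb_deriv X k = {w}"
    proof
      show "Ob' \<inter> cb_deriv X k \<subseteq> {w}"
      proof
        fix v assume v: "v \<in> Ob' \<inter> cb_deriv X k"
        then have "f v \<in> Ob \<inter> cb_deriv X k" using Suc.IH unfolding Ob'_def by auto
        then have "f v = f w" using Ob(2) by auto
        moreover have "v \<in> topspace X" "w \<in> topspace X" using v wk cb_deriv_subset_top[of X k] by auto
        ultimately show "v \<in> {w}" using inj by (auto dest: inj_onD)
      qed
      show "{w} \<subseteq> Ob' \<inter> cb_deriv X k"
        using Ob(2) wk cb_deriv_subset_top[of X k] unfolding Ob'_def by auto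
    qed
    ultimately have "openin (subtopology X (cb_deriv X k)) {w}"
      by (auto simp: openin_subtopology)
    then show False using nw by blast
  qed
qed

lemma cb_scattered:
  assumes n: "cb_deriv X n = {}" and V: "openin X V" and ne: "y \<in> V \<inter> cb_deriv X k"
  shows "\<exists>z\<in>V \<inter> cb_deriv X k. z \<notin> cb_deriv X (Suc k)"
proof (rule ccontr)
  assume "\<not> ?thesis"
  then have H: "V \<inter> cb_deriv X k \<subseteq> cb_deriv X (Suc k)" by auto
  have "V \<inter> cb_deriv X k \<subseteq> cb_deriv X (k + j)" for j
  proof (induction j)
    case 0 then show ?case by auto
  next
    case (Suc j)
    show ?case
    proof
      fix z assume z: "z \<in> V \<inter> cb_deriv X k"
      have zj: "z \<in> cb_deriv X (k + j)" using Suc.IH z by auto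
      have "\<not> openin (subtopology X (cb_deriv X (k + j))) {z}"
      proof
        assume "openin (subtopology X (cb_deriv X (k + j))) {z}"
        then obtain Ob where Ob: "openin X Ob" "{z} = Ob \<inter> cb_deriv X (k + j)"
          by (auto simp: openin_subtopology)
        have "{z} = (Ob \<inter> V) \<inter> cb_deriv X k" using Ob(2) Suc.IH z by auto
        moreover have "openin X (Ob \<inter> V)" using Ob(1) V by auto
        ultimately have "openin (subtopology X (cb_deriv X k)) {z}"
          by (auto simp: openin_subtopology)
        moreover have "z \<in> cb_deriv X (Suc k)" using H z by auto
        ultimately show False by auto
      qed
      then show "z \<in> cb_deriv X (k + Suc j)" using zj by auto
    qed
  qed
  from this[of n] have "V \<inter> cb_deriv X k \<subseteq> cb_deriv X n"
    using cb_deriv_antimono[of n "k+n" X] by auto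
  then show False using n ne by auto
qed

lemma ht_lemma:
  assumes n: "cb_deriv X n = {}" and x: "x \<in> topspace X" and i: "i < ht X x"
  shows "x \<in> cb_deriv X (Suc i)"
proof -
  have ex: "\<exists>k. x \<in> cb_deriv X k \<and> x \<notin> cb_deriv X (Suc k)"
  proof (rule ccontr)
    assume A: "\<not> ?thesis"
    have "x \<in> cb_deriv X k" for k
    proof (induction k)
      case 0 then show ?case using x by simp
    next
      case (Suc k) then show ?case using A by blast
    qed
    then show False using n by blast
  qed
  then obtain k where k: "x \<in> cb_deriv X k" "x \<notin> cb_deriv X (Suc k)" by blast
  have uniq: "m = k" if m1: "x \<in> cb_deriv X m" and m2: "x \<notin> cb_deriv X (Suc m)" for m
  proof (rule ccontr)
    assume "m \<noteq> k"
    then have "Suc m \<le> k \<or> Suc k \<le> m" by linarith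
    then show False
    proof
      assume "Suc m \<le> k"
      then have "cb_deriv X k \<subseteq> cb_deriv X (Suc m)" by (rule cb_deriv_antimono)
      then show False using k(1) m2 by blast
    next
      assume "Suc k \<le> m"
      then have "cb_deriv X m \<subseteq> cb_deriv X (Suc k)" by (rule cb_deriv_antimono)
      then show False using k(2) m1 by blast
    qed
  qed
  have "ht X x = k" unfolding ht_def
  proof (rule the_equality)
    show "x \<in> cb_deriv X k \<and> x \<notin> cb_deriv X (Suc k)" using k by blast
    show "\<And>m. x \<in> cb_deriv X m \<and> x \<notin> cb_deriv X (Suc m) \<Longrightarrow> m = k" using uniq by blast
  qed
  then have "Suc i \<le> k" using i by simp
  then have "cb_deriv X k \<subseteq> cb_deriv X (Suc i)" by (rule cb_deriv_antimono)
  then show ?thesis using k(1) by blast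
qed


section \<open>Sheaf lemmas\<close>

context
  fixes G :: "('g, 'b) monoid_scheme" and TG :: "'g topology"
    and X :: "'x topology" and act :: "'g \<Rightarrow> 'x \<Rightarrow> 'x" and F :: "('x, 'g, 'e) gsheaf"
  assumes gs: "is_gsheaf G TG X act F"
begin

lemma gs_lh: "local_homeo (tot F) X (proj F)"
  using gs unfolding is_gsheaf_def Let_def by (simp add: Ball_def)

lemma gs_zer_cont: "continuous_map X (tot F) (zer F)"
  using gs unfolding is_gsheaf_def Let_def by (simp add: Ball_def)

lemma gs_zer: "x \<in> topspace X \<Longrightarrow> zer F x \<in> topspace (tot F) \<and> proj F (zer F x) = x"
  using gs unfolding is_gsheaf_def Let_def by (simp add: Ball_def)

lemma gs_add: "x \<in> topspace X \<Longrightarrow> a \<in> topspace (tot F) \<Longrightarrow> b \<in> topspace (tot F) \<Longrightarrow>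
   proj F a = x \<Longrightarrow> proj F b = x \<Longrightarrow> add F a b \<in> topspace (tot F) \<and> proj F (add F a b) = x"
  using gs unfolding is_gsheaf_def Let_def by (simp add: Ball_def)

lemma gs_smul: "x \<in> topspace X \<Longrightarrow> a \<in> topspace (tot F) \<Longrightarrow>
   proj F a = x \<Longrightarrow> smul F r a \<in> topspace (tot F) \<and> proj F (smul F r a) = x"
  using gs unfolding is_gsheaf_def Let_def by (simp add: Ball_def)

lemma gs_vs: "x \<in> topspace X \<Longrightarrow> a \<in> topspace (tot F) \<Longrightarrow> b \<in> topspace (tot F) \<Longrightarrow>
   c \<in> topspace (tot F) \<Longrightarrow> proj F a = x \<Longrightarrow> proj F b = x \<Longrightarrow> proj F c = x \<Longrightarrow>
   add F (add F a b) c = add F a (add F b c) \<and> add F a b = add F b a \<and>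
   add F (zer F x) a = a \<and> add F a (smul F (-1) a) = zer F x"
proof -
  assume h: "x \<in> topspace X" "a \<in> topspace (tot F)" "b \<in> topspace (tot F)"
   "c \<in> topspace (tot F)" "proj F a = x" "proj F b = x" "proj F c = x"
  have A: "\<forall>x\<in>topspace X. \<forall>a\<in>{e \<in> topspace (tot F). proj F e = x}. \<forall>b\<in>{e \<in> topspace (tot F). proj F e = x}. \<forall>c\<in>{e \<in> topspace (tot F). proj F e = x}.
         add F (add F a b) c = add F a (add F b c) \<and> add F a b = add F b a \<and>
         add F (zer F x) a = a \<and> add F a (smul F (-1) a) = zer F x"
    using gs unfolding is_gsheaf_def Let_def by meson
  show ?thesis using A[rule_format, of x a b c] h by blast
qed

lemma gs_gact_cont: "continuous_map (prod_topology TG (tot F)) (tot F) (\<lambda>(g,e). gact F g e)"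
  using gs unfolding is_gsheaf_def Let_def by (simp add: Ball_def)

lemma gs_gact_proj: "g \<in> carrier G \<Longrightarrow> e \<in> topspace (tot F) \<Longrightarrow> proj F (gact F g e) = act g (proj F e)"
  using gs unfolding is_gsheaf_def Let_def by (simp add: Ball_def)

lemma gs_gact_add: "g \<in> carrier G \<Longrightarrow> x \<in> topspace X \<Longrightarrow> a \<in> topspace (tot F) \<Longrightarrow> b \<in> topspace (tot F) \<Longrightarrow>
   proj F a = x \<Longrightarrow> proj F b = x \<Longrightarrow> gact F g (add F a b) = add F (gact F g a) (gact F g b)"
  using gs unfolding is_gsheaf_def Let_def by (simp add: Ball_def)

lemma gs_proj_cont: "continuous_map (tot F) X (proj F)"
  using gs_lh unfolding local_homeo_def by blast

lemma gs_proj_top: "e \<in> topspace (tot F) \<Longrightarrow> proj F e \<in> topspace X"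
  using gs_proj_cont by (auto simp: continuous_map_def)

lemma gs_gact_cont1: "g \<in> topspace TG \<Longrightarrow> continuous_map (tot F) (tot F) (gact F g)"
proof -
  assume g: "g \<in> topspace TG"
  have "continuous_map (tot F) (prod_topology TG (tot F)) (\<lambda>e. (g, e))"
    by (intro continuous_map_pairedI) (use g in auto)
  from continuous_map_compose[OF this gs_gact_cont] show ?thesis by (simp add: o_def)
qed

lemma stalk_idem_zero:
  assumes x: "x \<in> topspace X" and b: "b \<in> topspace (tot F)" "proj F b = x" and bb: "add F b b = b"
  shows "b = zer F x"
proof -
  have m: "smul F (-1) b \<in> topspace (tot F)" "proj F (smul F (-1) b) = x" using gs_smul[OF x b] by auto
  have z: "zer F x \<in> topspace (tot F)" "proj F (zer F x) = x" using gs_zer[OF x] by auto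
  have "zer F x = add F b (smul F (-1) b)" using gs_vs[OF x b(1) b(1) b(1) b(2) b(2) b(2)] by simp
  also have "\<dots> = add F (add F b b) (smul F (-1) b)" using bb by simp
  also have "\<dots> = add F b (add F b (smul F (-1) b))" using gs_vs[OF x b(1) b(1) m(1) b(2) b(2) m(2)] by simp
  also have "\<dots> = add F b (zer F x)" using gs_vs[OF x b(1) b(1) b(1) b(2) b(2) b(2)] by simp
  also have "\<dots> = add F (zer F x) b" using gs_vs[OF x b(1) z(1) b(1) b(2) z(2) b(2)] by simp
  also have "\<dots> = b" using gs_vs[OF x b(1) b(1) b(1) b(2) b(2) b(2)] by simp
  finally show ?thesis by simp
qed

end

lemma act_cont1:
  assumes "cont_action G TG X act" "g \<in> topspace TG"
  shows "continuous_map X X (act g)"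
proof -
  have "continuous_map X (prod_topology TG X) (\<lambda>e. (g, e))"
    by (intro continuous_map_pairedI) (use assms in auto)
  moreover have "continuous_map (prod_topology TG X) X (\<lambda>(g,x). act g x)"
    using assms(1) unfolding cont_action_def by blast
  ultimately show ?thesis using continuous_map_compose by (fastforce simp: o_def)
qed

lemma act_top:
  assumes "cont_action G TG X act" "g \<in> topspace TG" "x \<in> topspace X"
  shows "act g x \<in> topspace X"
  using act_cont1[OF assms(1,2)] assms(3) by (auto simp: continuous_map_def)

lemma gs_gact_zer:
  assumes gs: "is_gsheaf G TG X act F" and ca: "cont_action G TG X act"
    and TG: "topspace TG = carrier G" and g: "g \<in> carrier G" and x: "x \<in> topspace X"
  shows "gact F g (zer F x) = zer F (act g x)"
proof -
  note z = gs_zer[OF gs x]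
  have zz: "add F (zer F x) (zer F x) = zer F x"
    using gs_vs[OF gs x, of "zer F x" "zer F x" "zer F x"] z by simp
  define b where "b = gact F g (zer F x)"
  have bt: "b \<in> topspace (tot F)"
    using gs_gact_cont1[OF gs, of g] g TG z unfolding b_def by (auto simp: continuous_map_def)
  have bp: "proj F b = act g x" unfolding b_def using gs_gact_proj[OF gs g] z by simp
  have "add F b b = b"
    unfolding b_def using gs_gact_add[OF gs g x, of "zer F x" "zer F x"] z zz by simp
  moreover have ax: "act g x \<in> topspace X" using act_top[OF ca _ x] g TG by simp
  ultimately show ?thesis using stalk_idem_zero[OF gs ax bt bp] unfolding b_def by simp
qed

lemma mor_zer:
  assumes gs: "is_gsheaf G TG X act F" and gs': "is_gsheaf G TG X act F'"
    and f: "gsheaf_mor G F F' f" and x: "x \<in> topspace X"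
  shows "f (zer F x) = zer F' x"
proof -
  note z = gs_zer[OF gs x]
  have zz: "add F (zer F x) (zer F x) = zer F x"
    using gs_vs[OF gs x, of "zer F x" "zer F x" "zer F x"] z by simp
  have fa: "f (add F (zer F x) (zer F x)) = add F' (f (zer F x)) (f (zer F x))"
    using f z unfolding gsheaf_mor_def by blast
  have bt: "f (zer F x) \<in> topspace (tot F')"
    using f z unfolding gsheaf_mor_def continuous_map_def by blast
  have bp: "proj F' (f (zer F x)) = x" using f z unfolding gsheaf_mor_def by auto
  show ?thesis using stalk_idem_zero[OF gs' x bt bp] fa zz by simp
qed


lemma act_mult:
  "cont_action G TG X act \<Longrightarrow> g \<in> carrier G \<Longrightarrow> h \<in> carrier G \<Longrightarrow> x \<in> topspace X \<Longrightarrow>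
   act (g \<otimes>\<^bsub>G\<^esub> h) x = act g (act h x)"
  unfolding cont_action_def by blast

lemma act_one: "cont_action G TG X act \<Longrightarrow> x \<in> topspace X \<Longrightarrow> act \<one>\<^bsub>G\<^esub> x = x"
  unfolding cont_action_def by blast

lemma act_inv_act:
  assumes ca: "cont_action G TG X act" and gr: "group G" and g: "g \<in> carrier G" and y: "y \<in> topspace X"
  shows "act (inv\<^bsub>G\<^esub> g) (act g y) = y" and "act g (act (inv\<^bsub>G\<^esub> g) y) = y"
proof -
  have ig: "inv\<^bsub>G\<^esub> g \<in> carrier G" using group.inv_closed[OF gr g] .
  show "act (inv\<^bsub>G\<^esub> g) (act g y) = y"
    using act_mult[OF ca ig g y] group.l_inv[OF gr g] act_one[OF ca y] by simp
  show "act g (act (inv\<^bsub>G\<^esub> g) y) = y"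
    using act_mult[OF ca g ig y] group.r_inv[OF gr g] act_one[OF ca y] by simp
qed

lemma stab_inv:
  assumes ca: "cont_action G TG X act" and gr: "group G" and x: "x \<in> topspace X"
    and g: "g \<in> stab G act x"
  shows "inv\<^bsub>G\<^esub> g \<in> stab G act x"
proof -
  have gc: "g \<in> carrier G" and gx: "act g x = x" using g unfolding stab_def by auto
  have "act (inv\<^bsub>G\<^esub> g) x = x" using act_inv_act(1)[OF ca gr gc x] gx by simp
  then show ?thesis using group.inv_closed[OF gr gc] unfolding stab_def by auto
qed

lemma stab_image:
  assumes ca: "cont_action G TG X act" and gr: "group G" and x: "x \<in> topspace X"
    and U: "U \<subseteq> topspace X" and inv: "\<forall>h\<in>stab G act x. act h ` U \<subseteq> U"
    and g: "g \<in> stab G act x"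
  shows "act g ` U = U" and "\<forall>y\<in>U. act (inv\<^bsub>G\<^esub> g) y \<in> U"
proof -
  have gc: "g \<in> carrier G" using g unfolding stab_def by auto
  have ig: "inv\<^bsub>G\<^esub> g \<in> stab G act x" using stab_inv[OF ca gr x g] .
  show i2: "\<forall>y\<in>U. act (inv\<^bsub>G\<^esub> g) y \<in> U" using inv ig by auto
  show "act g ` U = U"
  proof
    show "act g ` U \<subseteq> U" using inv g by auto
    show "U \<subseteq> act g ` U"
    proof
      fix y assume y: "y \<in> U"
      then have "y = act g (act (inv\<^bsub>G\<^esub> g) y)" using act_inv_act(2)[OF ca gr gc] U by auto
      then show "y \<in> act g ` U" using i2 y by auto
    qed
  qed
qed

lemma orbit_image:
  assumes ca: "cont_action G TG X act" and gr: "group G" and TG: "topspace TG = carrier G"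
    and A: "A \<in> orbits G X act" and g: "g \<in> carrier G"
  shows "act g ` A = A" and "A \<subseteq> topspace X"
proof -
  obtain w where w: "w \<in> topspace X" "A = (\<lambda>h. act h w) ` carrier G"
    using A unfolding orbits_def by auto
  show sub: "A \<subseteq> topspace X" using w act_top[OF ca] TG by auto
  show "act g ` A = A"
  proof
    show "act g ` A \<subseteq> A"
    proof
      fix y assume "y \<in> act g ` A"
      then obtain h where h: "h \<in> carrier G" "y = act g (act h w)" using w by auto
      then have "y = act (g \<otimes>\<^bsub>G\<^esub> h) w" using act_mult[OF ca g h(1) w(1)] by simp
      then show "y \<in> A" using w h monoid.m_closed[OF group.is_monoid[OF gr] g h(1)] by auto
    qed
    show "A \<subseteq> act g ` A"
    proof
      fix y assume yA: "y \<in> A"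
      then obtain h where h: "h \<in> carrier G" "y = act h w" using w by auto
      have ig: "inv\<^bsub>G\<^esub> g \<in> carrier G" using group.inv_closed[OF gr g] .
      have "act (inv\<^bsub>G\<^esub> g) y = act (inv\<^bsub>G\<^esub> g \<otimes>\<^bsub>G\<^esub> h) w"
        using h act_mult[OF ca ig h(1) w(1)] by simp
      then have "act (inv\<^bsub>G\<^esub> g) y \<in> A"
        using w(2) rev_image_eqI[OF monoid.m_closed[OF group.is_monoid[OF gr] ig h(1)], of "act (inv\<^bsub>G\<^esub> g) y" "\<lambda>h. act h w"] by simp
      moreover have "y = act g (act (inv\<^bsub>G\<^esub> g) y)" using act_inv_act(2)[OF ca gr g] yA sub by auto
      ultimately show "y \<in> act g ` A" by auto
    qed
  qed
qed

lemma orbit_of: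
  assumes ca: "cont_action G TG X act" and gr: "group G" and y: "y \<in> topspace X"
  shows "(\<lambda>h. act h y) ` carrier G \<in> orbits G X act" and "y \<in> (\<lambda>h. act h y) ` carrier G"
proof -
  show "(\<lambda>h. act h y) ` carrier G \<in> orbits G X act" using y unfolding orbits_def by auto
  have "act \<one>\<^bsub>G\<^esub> y = y" using act_one[OF ca y] .
  then show "y \<in> (\<lambda>h. act h y) ` carrier G" using monoid.one_closed[OF group.is_monoid[OF gr]] by force
qed

lemma orbit_cb:
  assumes ca: "cont_action G TG X act" and gr: "group G" and TG: "topspace TG = carrier G"
    and A: "A \<in> orbits G X act" and y: "y \<in> A" and z: "z \<in> A" and yk: "y \<in> cb_deriv X k"
  shows "z \<in> cb_deriv X k"
proof -
  obtain w where w: "w \<in> topspace X" "A = (\<lambda>h. act h w) ` carrier G"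
    using A unfolding orbits_def by auto
  obtain h1 where h1: "h1 \<in> carrier G" "y = act h1 w" using w y by auto
  obtain h2 where h2: "h2 \<in> carrier G" "z = act h2 w" using w z by auto
  define g where "g = h2 \<otimes>\<^bsub>G\<^esub> inv\<^bsub>G\<^esub> h1"
  have gc: "g \<in> carrier G" unfolding g_def using gr h1 h2 by (simp add: group.inv_closed monoid.m_closed group.is_monoid)
  have "act g y = act h2 (act (inv\<^bsub>G\<^esub> h1) (act h1 w))"
    unfolding g_def h1(2)
    using act_mult[OF ca h2(1) group.inv_closed[OF gr h1(1)]] act_top[OF ca] TG h1 w by simp
  also have "\<dots> = z" using act_inv_act(1)[OF ca gr h1(1) w(1)] h2 by simp
  finally have zg: "z = act g y" by simp
  have inj: "inj_on (act g) (topspace X)"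
    by (rule inj_onI) (metis act_inv_act(1)[OF ca gr gc])
  have cont: "continuous_map X X (act g)" using act_cont1[OF ca] gc TG by simp
  show ?thesis using cb_deriv_inj_map[OF cont inj yk] zg by simp
qed


section \<open>Sections\<close>

lemma sec_cont: "s \<in> sections X F S \<Longrightarrow> continuous_map (subtopology X S) (tot F) s"
  unfolding sections_def by blast

lemma sec_proj: "s \<in> sections X F S \<Longrightarrow> y \<in> S \<Longrightarrow> proj F (s y) = y"
  unfolding sections_def by blast

lemma sec_out: "s \<in> sections X F S \<Longrightarrow> y \<notin> S \<Longrightarrow> s y = undefined"
  unfolding sections_def by blast

lemma sec_top: "s \<in> sections X F S \<Longrightarrow> y \<in> S \<Longrightarrow> y \<in> topspace X \<Longrightarrow> s y \<in> topspace (tot F)"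
  using sec_cont[of s X F S] unfolding continuous_map_def by auto

lemma sectionsI:
  "continuous_map (subtopology X S) (tot F) s \<Longrightarrow> (\<And>y. y \<in> S \<Longrightarrow> proj F (s y) = y) \<Longrightarrow>
   (\<And>y. y \<notin> S \<Longrightarrow> s y = undefined) \<Longrightarrow> s \<in> sections X F S"
  unfolding sections_def by blast

lemma sections_restrict:
  assumes s: "s \<in> sections X F U" and V: "V \<subseteq> U"
  shows "restrict s V \<in> sections X F V"
proof (rule sectionsI)
  show "continuous_map (subtopology X V) (tot F) (restrict s V)"
    by (rule continuous_map_eq[OF continuous_map_from_subtopology_mono[OF sec_cont[OF s] V]]) auto
  show "\<And>y. y \<in> V \<Longrightarrow> proj F (restrict s V y) = y" using sec_proj[OF s] V by auto
  show "\<And>y. y \<notin> V \<Longrightarrow> restrict s V y = undefined" by auto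
qed

lemma sec_map_sections:
  assumes f: "gsheaf_mor G F F' f" and s: "s \<in> sections X F U" and U: "U \<subseteq> topspace X"
  shows "sec_map f U s \<in> sections X F' U"
proof (rule sectionsI)
  have fc: "continuous_map (tot F) (tot F') f" using f unfolding gsheaf_mor_def by blast
  show "continuous_map (subtopology X U) (tot F') (sec_map f U s)"
    by (rule continuous_map_eq[OF continuous_map_compose[OF sec_cont[OF s] fc]]) (auto simp: sec_map_def)
  show "\<And>y. y \<in> U \<Longrightarrow> proj F' (sec_map f U s y) = y"
    using f sec_proj[OF s] sec_top[OF s] U unfolding gsheaf_mor_def sec_map_def by auto
  show "\<And>y. y \<notin> U \<Longrightarrow> sec_map f U s y = undefined" by (auto simp: sec_map_def)
qed

definition zsec :: "('x, 'g, 'e) gsheaf \<Rightarrow> 'x set \<Rightarrow> 'x \<Rightarrow> 'e" where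
  "zsec F S = (\<lambda>y. if y \<in> S then zer F y else undefined)"

lemma zsec_sections:
  assumes gs: "is_gsheaf G TG X act F" and S: "S \<subseteq> topspace X"
  shows "zsec F S \<in> sections X F S"
proof (rule sectionsI)
  show "continuous_map (subtopology X S) (tot F) (zsec F S)"
    by (rule continuous_map_eq[OF continuous_map_from_subtopology[OF gs_zer_cont[OF gs]]]) (auto simp: zsec_def)
  show "\<And>y. y \<in> S \<Longrightarrow> proj F (zsec F S y) = y" using gs_zer[OF gs] S by (auto simp: zsec_def)
  show "\<And>y. y \<notin> S \<Longrightarrow> zsec F S y = undefined" by (auto simp: zsec_def)
qed

lemma sec_act_sections:
  assumes gs: "is_gsheaf G TG X act F" and ca: "cont_action G TG X act" and TG: "topspace TG = carrier G"
    and gr: "group G" and g: "g \<in> carrier G" and S: "S \<subseteq> topspace X"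
    and gS: "act g ` S = S" and igS: "\<forall>y\<in>S. act (inv\<^bsub>G\<^esub> g) y \<in> S"
    and s: "s \<in> sections X F S"
  shows "sec_act G act F g S s \<in> sections X F S"
proof (rule sectionsI)
  have ig: "inv\<^bsub>G\<^esub> g \<in> carrier G" using group.inv_closed[OF gr g] .
  have c1: "continuous_map (subtopology X S) (subtopology X S) (act (inv\<^bsub>G\<^esub> g))"
    unfolding continuous_map_in_subtopology
    using continuous_map_from_subtopology[OF act_cont1[OF ca, of "inv\<^bsub>G\<^esub> g"]] ig TG igS S
    by (auto simp: topspace_subtopology)
  have c2: "continuous_map (subtopology X S) (tot F) (\<lambda>y. gact F g (s (act (inv\<^bsub>G\<^esub> g) y)))"
    using continuous_map_compose[OF continuous_map_compose[OF c1 sec_cont[OF s]] gs_gact_cont1[OF gs, of g]] g TG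
    by (simp add: o_def)
  show "continuous_map (subtopology X S) (tot F) (sec_act G act F g S s)"
    by (rule continuous_map_eq[OF c2]) (auto simp: sec_act_def gS topspace_subtopology)
  show "\<And>y. y \<in> S \<Longrightarrow> proj F (sec_act G act F g S s y) = y"
  proof -
    fix y assume y: "y \<in> S"
    have a: "act (inv\<^bsub>G\<^esub> g) y \<in> S" using igS y by auto
    have "proj F (gact F g (s (act (inv\<^bsub>G\<^esub> g) y))) = act g (proj F (s (act (inv\<^bsub>G\<^esub> g) y)))"
      using gs_gact_proj[OF gs g sec_top[OF s a]] a S by auto
    also have "\<dots> = y" using sec_proj[OF s a] act_inv_act(2)[OF ca gr g] y S by auto
    finally show "proj F (sec_act G act F g S s y) = y" using y gS by (simp add: sec_act_def)
  qed
  show "\<And>y. y \<notin> S \<Longrightarrow> sec_act G act F g S s y = undefined" using gS by (simp add: sec_act_def)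
qed

lemma sec_agree:
  assumes lh: "local_homeo (tot F) X (proj F)" and W: "openin X W"
    and s: "s \<in> sections X F W" and t: "t \<in> sections X F W" and y: "y \<in> W" and st: "s y = t y"
  shows "\<exists>W'. openin X W' \<and> y \<in> W' \<and> W' \<subseteq> W \<and> (\<forall>z\<in>W'. s z = t z)"
proof -
  have Wt: "W \<subseteq> topspace X" using W by (simp add: openin_subset)
  have ey: "s y \<in> topspace (tot F)" using sec_top[OF s y] y Wt by auto
  obtain V where V: "openin (tot F) V" "s y \<in> V" "openin X (proj F ` V)"
      "homeomorphic_map (subtopology (tot F) V) (subtopology X (proj F ` V)) (proj F)"
    using lh ey unfolding local_homeo_def by blast
  have inj: "inj_on (proj F) V"
    using homeomorphic_imp_injective_map[OF V(4)] openin_subset[OF V(1)]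
    by (simp add: topspace_subtopology Int_absorb1)
  define W' where "W' = {z \<in> topspace (subtopology X W). s z \<in> V} \<inter> {z \<in> topspace (subtopology X W). t z \<in> V}"
  have o1: "openin (subtopology X W) {z \<in> topspace (subtopology X W). s z \<in> V}"
    using openin_continuous_map_preimage[OF sec_cont[OF s] V(1)] .
  have o2: "openin (subtopology X W) {z \<in> topspace (subtopology X W). t z \<in> V}"
    using openin_continuous_map_preimage[OF sec_cont[OF t] V(1)] .
  have "openin (subtopology X W) W'" unfolding W'_def using o1 o2 by auto
  then have oW': "openin X W'" and sub: "W' \<subseteq> W" using openin_open_subtopology[OF W] by auto
  have yW': "y \<in> W'" unfolding W'_def using y Wt V(2) st by (auto simp: topspace_subtopology)
  have "\<forall>z\<in>W'. s z = t z"
  proof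
    fix z assume z: "z \<in> W'"
    then have zW: "z \<in> W" and sv: "s z \<in> V" and tv: "t z \<in> V" unfolding W'_def by (auto simp: topspace_subtopology)
    have "proj F (s z) = proj F (t z)" using sec_proj[OF s zW] sec_proj[OF t zW] by simp
    then show "s z = t z" using inj sv tv by (auto dest: inj_onD)
  qed
  then show ?thesis using oW' yW' sub by blast
qed


lemma stab_orbit_image:
  assumes ca: "cont_action G TG X act" and gr: "group G" and TG: "topspace TG = carrier G"
    and x: "x \<in> topspace X" and U: "U \<subseteq> topspace X" and inv: "\<forall>h\<in>stab G act x. act h ` U \<subseteq> U"
    and g: "g \<in> stab G act x" and A: "A \<in> orbits G X act"
  shows "act g ` (U \<inter> A) = U \<inter> A" and "\<forall>y\<in>U \<inter> A. act (inv\<^bsub>G\<^esub> g) y \<in> U \<inter> A"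
proof -
  have gc: "g \<in> carrier G" using g unfolding stab_def by auto
  have ig: "inv\<^bsub>G\<^esub> g \<in> carrier G" using group.inv_closed[OF gr gc] .
  note si = stab_image[OF ca gr x U inv g]
  note oi = orbit_image[OF ca gr TG A gc] orbit_image[OF ca gr TG A ig]
  show i2: "\<forall>y\<in>U \<inter> A. act (inv\<^bsub>G\<^esub> g) y \<in> U \<inter> A" using si(2) oi(3) by auto
  show "act g ` (U \<inter> A) = U \<inter> A"
  proof
    show "act g ` (U \<inter> A) \<subseteq> U \<inter> A" using si(1) oi(1) by auto
    show "U \<inter> A \<subseteq> act g ` (U \<inter> A)"
    proof
      fix y assume y: "y \<in> U \<inter> A"
      then have "y = act g (act (inv\<^bsub>G\<^esub> g) y)" using act_inv_act(2)[OF ca gr gc] U by auto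
      then show "y \<in> act g ` (U \<inter> A)" using i2 y by auto
    qed
  qed
qed

lemma main_step:
  fixes G :: "('g, 'b) monoid_scheme" and TG :: "'g topology"
    and X :: "'x topology" and act :: "'g \<Rightarrow> 'x \<Rightarrow> 'x"
    and F J C' :: "('x, 'g, 'e) gsheaf" and d qq :: "'e \<Rightarrow> 'e"
  assumes gr: "group G" and TG: "topspace TG = carrier G" and ca: "cont_action G TG X act"
    and nX: "cb_deriv X n = {}"
    and gsF: "is_gsheaf G TG X act F"
    and I0: "is_I0 G TG X act F J d"
    and coker: "is_cokernel G TG X act F J d C' qq"
    and x: "x \<in> topspace X" and Uo: "openin X U" and inv: "\<forall>h\<in>stab G act x. act h ` U \<subseteq> U"
    and c: "c \<in> sections X F U" and cinv: "\<forall>g\<in>stab G act x. sec_act G act F g U c = c"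
    and cnz: "\<forall>y\<in>U \<inter> cb_deriv X k. c y \<noteq> zer F y"
  shows "\<exists>s\<in>sections X J U. (\<forall>g\<in>stab G act x. sec_act G act J g U s = s) \<and>
           (\<forall>y\<in>U \<inter> cb_deriv X (Suc k). qq (s y) \<noteq> zer C' y)"
proof -
  have Ut: "U \<subseteq> topspace X" using Uo by (simp add: openin_subset)
  have gsJ: "is_gsheaf G TG X act J" and dm: "gsheaf_mor G F J d" using I0 unfolding is_I0_def by auto
  have ex\<Phi>: "\<exists>\<Phi>. \<forall>U. openin X U \<longrightarrow>
        bij_betw (\<Phi> U) (sections X J U) (I0_sections G X act F U) \<and>
        (\<forall>s\<in>sections X F U. \<Phi> U (sec_map d U s) =
            (\<lambda>A. if A \<in> orbits G X act then restrict s (U \<inter> A) else undefined)) \<and>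
        (\<forall>V t. openin X V \<and> V \<subseteq> U \<and> t \<in> sections X J U \<longrightarrow>
            \<Phi> V (restrict t V) =
            (\<lambda>A. if A \<in> orbits G X act then restrict (\<Phi> U t A) (V \<inter> A) else undefined)) \<and>
        (\<forall>t1\<in>sections X J U. \<forall>t2\<in>sections X J U. \<Phi> U (sec_add J U t1 t2) =
            (\<lambda>A. if A \<in> orbits G X act then sec_add F (U \<inter> A) (\<Phi> U t1 A) (\<Phi> U t2 A) else undefined)) \<and>
        (\<forall>t\<in>sections X J U. \<forall>q. \<Phi> U (sec_smul J U q t) =
            (\<lambda>A. if A \<in> orbits G X act then sec_smul F (U \<inter> A) q (\<Phi> U t A) else undefined)) \<and>
        (\<forall>g\<in>carrier G. \<forall>t\<in>sections X J U. \<Phi> (act g ` U) (sec_act G act J g U t) =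
            (\<lambda>A. if A \<in> orbits G X act then sec_act G act F g (U \<inter> A) (\<Phi> U t A) else undefined))"
    using I0 unfolding is_I0_def by (rule conjunct2[THEN conjunct2])
  then obtain \<Phi> where \<Phi>: "\<forall>U. openin X U \<longrightarrow>
        bij_betw (\<Phi> U) (sections X J U) (I0_sections G X act F U) \<and>
        (\<forall>s\<in>sections X F U. \<Phi> U (sec_map d U s) =
            (\<lambda>A. if A \<in> orbits G X act then restrict s (U \<inter> A) else undefined)) \<and>
        (\<forall>V t. openin X V \<and> V \<subseteq> U \<and> t \<in> sections X J U \<longrightarrow>
            \<Phi> V (restrict t V) =
            (\<lambda>A. if A \<in> orbits G X act then restrict (\<Phi> U t A) (V \<inter> A) else undefined)) \<and>
        (\<forall>t1\<in>sections X J U. \<forall>t2\<in>sections X J U. \<Phi> U (sec_add J U t1 t2) =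
            (\<lambda>A. if A \<in> orbits G X act then sec_add F (U \<inter> A) (\<Phi> U t1 A) (\<Phi> U t2 A) else undefined)) \<and>
        (\<forall>t\<in>sections X J U. \<forall>q. \<Phi> U (sec_smul J U q t) =
            (\<lambda>A. if A \<in> orbits G X act then sec_smul F (U \<inter> A) q (\<Phi> U t A) else undefined)) \<and>
        (\<forall>g\<in>carrier G. \<forall>t\<in>sections X J U. \<Phi> (act g ` U) (sec_act G act J g U t) =
            (\<lambda>A. if A \<in> orbits G X act then sec_act G act F g (U \<inter> A) (\<Phi> U t A) else undefined))"
    by (rule exE)
  note PU = spec[OF \<Phi>, of U, THEN mp, OF Uo]
  have bij: "bij_betw (\<Phi> U) (sections X J U) (I0_sections G X act F U)" using PU[THEN conjunct1] .
  note \<Phi>res = PU[THEN conjunct2, THEN conjunct2, THEN conjunct1, rule_format]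
  note \<Phi>act = PU[THEN conjunct2, THEN conjunct2, THEN conjunct2, THEN conjunct2, THEN conjunct2, rule_format]
  have \<Phi>d: "\<And>W s. openin X W \<Longrightarrow> s \<in> sections X F W \<Longrightarrow> \<Phi> W (sec_map d W s) =
            (\<lambda>A. if A \<in> orbits G X act then restrict s (W \<inter> A) else undefined)"
    using spec[OF \<Phi>, THEN mp, THEN conjunct2, THEN conjunct1] by blast
  define t where "t = (\<lambda>A. if A \<in> orbits G X act then
     (if A \<subseteq> cb_deriv X (Suc k) then restrict c (U \<inter> A) else zsec F (U \<inter> A)) else undefined)"
  have tI: "t \<in> I0_sections G X act F U"
    unfolding I0_sections_def
  proof (intro CollectI conjI allI ballI impI)
    fix A assume A: "A \<in> orbits G X act"
    have "U \<inter> A \<subseteq> topspace X" using Ut by auto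
    then show "t A \<in> sections X F (U \<inter> A)"
      using A sections_restrict[OF c, of "U \<inter> A"] zsec_sections[OF gsF] unfolding t_def by auto
  next
    fix A assume "A \<notin> orbits G X act" then show "t A = undefined" unfolding t_def by auto
  qed
  obtain s where s: "s \<in> sections X J U" "\<Phi> U s = t"
    using bij tI unfolding bij_betw_def by (metis imageE)
  have inj: "inj_on (\<Phi> U) (sections X J U)" using bij unfolding bij_betw_def by blast
  have sinv: "\<forall>g\<in>stab G act x. sec_act G act J g U s = s"
  proof
    fix g assume g: "g \<in> stab G act x"
    have gc: "g \<in> carrier G" using g unfolding stab_def by auto
    note si = stab_image[OF ca gr x Ut inv g]
    have s'S: "sec_act G act J g U s \<in> sections X J U"
      using sec_act_sections[OF gsJ ca TG gr gc Ut si(1) si(2) s(1)] .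
    have "\<Phi> U (sec_act G act J g U s) =
       (\<lambda>A. if A \<in> orbits G X act then sec_act G act F g (U \<inter> A) (t A) else undefined)"
    proof -
      have "\<Phi> U (sec_act G act J g U s) = \<Phi> (act g ` U) (sec_act G act J g U s)" using si(1) by simp
      also have "\<dots> = (\<lambda>A. if A \<in> orbits G X act then sec_act G act F g (U \<inter> A) (\<Phi> U s A) else undefined)"
        by (rule \<Phi>act[OF gc s(1)])
      finally show ?thesis unfolding s(2) .
    qed
    also have "\<dots> = t"
    proof
      fix A
      show "(if A \<in> orbits G X act then sec_act G act F g (U \<inter> A) (t A) else undefined) = t A"
      proof (cases "A \<in> orbits G X act")
        case False then show ?thesis unfolding t_def by simp
      next
        case A: True
        note soi = stab_orbit_image[OF ca gr TG x Ut inv g A]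
        have "sec_act G act F g (U \<inter> A) (t A) = t A"
        proof
          fix y
          show "sec_act G act F g (U \<inter> A) (t A) y = t A y"
          proof (cases "y \<in> U \<inter> A")
            case False
            then show ?thesis using soi(1) A unfolding sec_act_def t_def by (auto simp: zsec_def)
          next
            case y: True
            define w where "w = act (inv\<^bsub>G\<^esub> g) y"
            have w: "w \<in> U \<inter> A" using soi(2) y unfolding w_def by auto
            have yw: "act g w = y" unfolding w_def using act_inv_act(2)[OF ca gr gc] y Ut by auto
            have lhs: "sec_act G act F g (U \<inter> A) (t A) y = gact F g (t A w)"
              using soi(1) y unfolding sec_act_def w_def by simp
            show ?thesis
            proof (cases "A \<subseteq> cb_deriv X (Suc k)")
              case True
              have "gact F g (c w) = sec_act G act F g U c y"
                using si(1) y unfolding sec_act_def w_def by simp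
              also have "\<dots> = c y" using cinv g by simp
              finally show ?thesis using lhs w y True A unfolding t_def by simp
            next
              case False
              have "gact F g (zer F w) = zer F y"
                using gs_gact_zer[OF gsF ca TG gc] w Ut yw by auto
              then show ?thesis using lhs w y False A unfolding t_def by (simp add: zsec_def)
            qed
          qed
        qed
        then show ?thesis using A by simp
      qed
    qed
    finally have "\<Phi> U (sec_act G act J g U s) = \<Phi> U s" using s(2) by simp
    then show "sec_act G act J g U s = s" using inj s'S s(1) by (auto dest: inj_onD)
  qed
  have snz: "\<forall>y\<in>U \<inter> cb_deriv X (Suc k). qq (s y) \<noteq> zer C' y"
  proof (intro ballI notI)
    fix y assume y: "y \<in> U \<inter> cb_deriv X (Suc k)" and qz: "qq (s y) = zer C' y"
    have yU: "y \<in> U" and yt: "y \<in> topspace X" using y Ut by auto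
    have sy: "s y \<in> topspace (tot J)" "proj J (s y) = y"
      using sec_top[OF s(1) yU yt] sec_proj[OF s(1) yU] by auto
    obtain e0 where e0: "e0 \<in> topspace (tot F)" "d e0 = s y"
      using coker sy qz unfolding is_cokernel_def by metis
    have pe0: "proj F e0 = y" using dm e0 sy unfolding gsheaf_mor_def by metis
    obtain V where V: "openin (tot F) V" "e0 \<in> V" "openin X (proj F ` V)"
      "homeomorphic_map (subtopology (tot F) V) (subtopology X (proj F ` V)) (proj F)"
      using gs_lh[OF gsF] e0(1) unfolding local_homeo_def by blast
    obtain \<sigma> where \<sigma>: "homeomorphic_maps (subtopology (tot F) V) (subtopology X (proj F ` V)) (proj F) \<sigma>"
      using V(4) homeomorphic_map_maps by blast
    have Vt: "V \<subseteq> topspace (tot F)" using V(1) by (simp add: openin_subset)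
    have pVt: "proj F ` V \<subseteq> topspace X" using V(3) by (simp add: openin_subset)
    have \<sigma>c: "continuous_map (subtopology X (proj F ` V)) (tot F) \<sigma>"
      using \<sigma> unfolding homeomorphic_maps_def by (blast intro: continuous_map_into_fulltopology)
    have \<sigma>p: "\<And>z. z \<in> proj F ` V \<Longrightarrow> proj F (\<sigma> z) = z"
      using \<sigma> pVt unfolding homeomorphic_maps_def by (auto simp: topspace_subtopology)
    have \<sigma>e: "\<sigma> (proj F e0) = e0"
      using \<sigma> V(2) Vt unfolding homeomorphic_maps_def by (auto simp: topspace_subtopology)
    define W0 where "W0 = proj F ` V \<inter> U"
    have W0o: "openin X W0" unfolding W0_def using V(3) Uo by auto
    have yW0: "y \<in> W0" unfolding W0_def using pe0 V(2) yU by auto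
    define c' where "c' = restrict \<sigma> W0"
    have c'S: "c' \<in> sections X F W0"
    proof (rule sectionsI)
      show "continuous_map (subtopology X W0) (tot F) c'"
        unfolding c'_def
        by (rule continuous_map_eq[OF continuous_map_from_subtopology_mono[OF \<sigma>c]]) (auto simp: W0_def)
      show "\<And>y. y \<in> W0 \<Longrightarrow> proj F (c' y) = y" using \<sigma>p unfolding c'_def W0_def by auto
      show "\<And>y. y \<notin> W0 \<Longrightarrow> c' y = undefined" unfolding c'_def by auto
    qed
    have c'y: "c' y = e0" using \<sigma>e pe0 yW0 unfolding c'_def by auto
    have W0t: "W0 \<subseteq> topspace X" using W0o by (simp add: openin_subset)
    have d'S: "sec_map d W0 c' \<in> sections X J W0" using sec_map_sections[OF dm c'S W0t] .
    have s0S: "restrict s W0 \<in> sections X J W0" using sections_restrict[OF s(1)] W0_def by auto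
    have "sec_map d W0 c' y = restrict s W0 y" using yW0 c'y e0(2) by (simp add: sec_map_def)
    then obtain W1 where W1: "openin X W1" "y \<in> W1" "W1 \<subseteq> W0"
        "\<forall>z\<in>W1. sec_map d W0 c' z = restrict s W0 z"
      using sec_agree[OF gs_lh[OF gsJ] W0o d'S s0S yW0] by blast
    have W1U: "W1 \<subseteq> U" using W1(3) unfolding W0_def by auto
    define c1 where "c1 = restrict c' W1"
    have c1S: "c1 \<in> sections X F W1" unfolding c1_def using sections_restrict[OF c'S W1(3)] .
    have eq: "restrict s W1 = sec_map d W1 c1"
    proof
      fix z show "restrict s W1 z = sec_map d W1 c1 z"
      proof (cases "z \<in> W1")
        case True
        then have zW0: "z \<in> W0" using W1(3) by blast
        have "sec_map d W0 c' z = restrict s W0 z" using W1(4) True by blast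
        then have "d (c' z) = s z" using zW0 by (simp add: sec_map_def)
        then show ?thesis using True by (simp add: sec_map_def c1_def)
      next
        case False then show ?thesis by (simp add: sec_map_def)
      qed
    qed
    have key: "\<And>z A. z \<in> W1 \<Longrightarrow> A \<in> orbits G X act \<Longrightarrow> z \<in> A \<Longrightarrow> t A z = c' z"
    proof -
      fix z A assume z: "z \<in> W1" and A: "A \<in> orbits G X act" and zA: "z \<in> A"
      have "\<Phi> W1 (restrict s W1) A = \<Phi> W1 (sec_map d W1 c1) A" using eq by simp
      then have "restrict (t A) (W1 \<inter> A) z = restrict c1 (W1 \<inter> A) z"
        using \<Phi>res[OF conjI[OF W1(1) conjI[OF W1U s(1)]]] \<Phi>d[OF W1(1) c1S] A s(2) by simp
      then show "t A z = c' z" using z zA unfolding c1_def by simp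
    qed
    define Ay where "Ay = (\<lambda>h. act h y) ` carrier G"
    have Ay: "Ay \<in> orbits G X act" "y \<in> Ay" using orbit_of[OF ca gr yt] unfolding Ay_def by auto
    have Aycb: "Ay \<subseteq> cb_deriv X (Suc k)"
      using orbit_cb[OF ca gr TG Ay(1) Ay(2)] y by blast
    have "t Ay y = c y" using Ay Aycb yU unfolding t_def by simp
    then have c'yc: "c' y = c y" using key[OF W1(2) Ay] by simp
    have r1: "restrict c' W1 \<in> sections X F W1" using c1S unfolding c1_def .
    have r2: "restrict c W1 \<in> sections X F W1" using sections_restrict[OF c W1U] .
    have r12: "restrict c' W1 y = restrict c W1 y" using c'yc W1(2) by simp
    obtain W2 where W2: "openin X W2" "y \<in> W2" "W2 \<subseteq> W1" "\<forall>z\<in>W2. restrict c' W1 z = restrict c W1 z"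
      using sec_agree[OF gs_lh[OF gsF] W1(1) r1 r2 W1(2) r12] by blast
    have yk: "y \<in> cb_deriv X k" using y cb_deriv_Suc_sub[of X k] by blast
    have yW2k: "y \<in> W2 \<inter> cb_deriv X k" using W2(2) yk by blast
    obtain z where z: "z \<in> W2 \<inter> cb_deriv X k" "z \<notin> cb_deriv X (Suc k)"
      using cb_scattered[OF nX W2(1) yW2k] by blast
    have zW1: "z \<in> W1" using z W2(3) by auto
    have zU: "z \<in> U" using zW1 W1U by auto
    have zt: "z \<in> topspace X" using zU Ut by auto
    define Az where "Az = (\<lambda>h. act h z) ` carrier G"
    have Az: "Az \<in> orbits G X act" "z \<in> Az" using orbit_of[OF ca gr zt] unfolding Az_def by auto
    have nAz: "\<not> Az \<subseteq> cb_deriv X (Suc k)" using Az(2) z(2) by blast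
    have "t Az z = zer F z" using Az nAz zU unfolding t_def by (simp add: zsec_def)
    then have "c' z = zer F z" using key[OF zW1 Az] by simp
    moreover have "c' z = c z" using W2(4) z zW1 by auto
    moreover have "c z \<noteq> zer F z" using cnz zU z by auto
    ultimately show False by simp
  qed
  show ?thesis using s(1) sinv snz by blast
qed


lemma base_case:
  fixes G :: "('g, 'b) monoid_scheme" and TG :: "'g topology"
    and X :: "'x topology" and act :: "'g \<Rightarrow> 'x \<Rightarrow> 'x" and E :: "('x, 'g, 'e) gsheaf"
  assumes gr: "group G" and TG: "topspace TG = carrier G" and ca: "cont_action G TG X act"
    and gsE: "is_gsheaf G TG X act E" and iso: "gsheaf_iso G E (constQ X act)"
    and x: "x \<in> topspace X" and Uo: "openin X U" and inv: "\<forall>h\<in>stab G act x. act h ` U \<subseteq> U"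
  shows "\<exists>c\<in>sections X E U. (\<forall>g\<in>stab G act x. sec_act G act E g U c = c) \<and>
           (\<forall>y\<in>U. c y \<noteq> zer E y)"
proof -
  have Ut: "U \<subseteq> topspace X" using Uo by (simp add: openin_subset)
  obtain f h where f: "gsheaf_mor G E (constQ X act) f" and h: "gsheaf_mor G (constQ X act) E h"
    and fh: "\<forall>e\<in>topspace (tot (constQ X act)). f (h e) = e"
    using iso unfolding gsheaf_iso_def by blast
  have totQ: "tot (constQ X act) = prod_topology X (discrete_topology UNIV)" by (simp add: constQ_def)
  have inQ: "\<And>y r. y \<in> topspace X \<Longrightarrow> (y, r) \<in> topspace (tot (constQ X act))"
    by (simp add: totQ)
  define c where "c = (\<lambda>y. if y \<in> U then h (y, 1::rat) else undefined)"
  have hc: "continuous_map (prod_topology X (discrete_topology UNIV)) (tot E) h"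
    using h totQ unfolding gsheaf_mor_def by simp
  have pc: "continuous_map X (prod_topology X (discrete_topology (UNIV::rat set))) (\<lambda>y. (y, 1))"
    by (intro continuous_map_pairedI) auto
  have hp: "\<And>y r. y \<in> topspace X \<Longrightarrow> proj E (h (y, r)) = y"
  proof -
    fix y r assume "y \<in> topspace X"
    then have "proj E (h (y, r)) = proj (constQ X act) (y, r)" using h inQ unfolding gsheaf_mor_def by blast
    then show "proj E (h (y, r)) = y" by (simp add: constQ_def)
  qed
  have cS: "c \<in> sections X E U"
  proof (rule sectionsI)
    show "continuous_map (subtopology X U) (tot E) c"
      unfolding c_def
      by (rule continuous_map_eq[OF continuous_map_from_subtopology[OF continuous_map_compose[OF pc hc]]])
        (auto simp: topspace_subtopology)
    show "\<And>y. y \<in> U \<Longrightarrow> proj E (c y) = y" using hp Ut unfolding c_def by auto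
    show "\<And>y. y \<notin> U \<Longrightarrow> c y = undefined" unfolding c_def by auto
  qed
  have nz: "\<forall>y\<in>U. c y \<noteq> zer E y"
  proof (intro ballI notI)
    fix y assume yU: "y \<in> U" and eq: "c y = zer E y"
    have yt: "y \<in> topspace X" using yU Ut by auto
    define z where "z = zer E y"
    have z: "z \<in> topspace (tot E)" "proj E z = y" using gs_zer[OF gsE yt] unfolding z_def by auto
    have zz: "add E z z = z" using gs_vs[OF gsE yt z(1) z(1) z(1) z(2) z(2) z(2)] unfolding z_def by simp
    have "f (add E z z) = add (constQ X act) (f z) (f z)" using f z unfolding gsheaf_mor_def by blast
    then have A: "f z = add (constQ X act) (f z) (f z)" using zz by simp
    have "f (h (y, 1)) = (y, 1)" using fh inQ[OF yt] by blast
    then have "f z = (y, 1)" using eq yU unfolding c_def z_def by simp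
    with A show False by (simp add: constQ_def)
  qed
  have ci: "\<forall>g\<in>stab G act x. sec_act G act E g U c = c"
  proof
    fix g assume g: "g \<in> stab G act x"
    have gc: "g \<in> carrier G" using g unfolding stab_def by auto
    note si = stab_image[OF ca gr x Ut inv g]
    show "sec_act G act E g U c = c"
    proof
      fix y show "sec_act G act E g U c y = c y"
      proof (cases "y \<in> U")
        case False then show ?thesis using si(1) unfolding sec_act_def c_def by simp
      next
        case True
        define w where "w = act (inv\<^bsub>G\<^esub> g) y"
        have w: "w \<in> U" using si(2) True unfolding w_def by auto
        have yw: "act g w = y" unfolding w_def using act_inv_act(2)[OF ca gr gc] True Ut by auto
        have "gact E g (h (w, 1)) = h (gact (constQ X act) g (w, 1))"
          using h gc inQ w Ut unfolding gsheaf_mor_def by (metis subsetD)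
        also have "\<dots> = h (y, 1)" using yw by (simp add: constQ_def)
        finally show ?thesis using True si(1) w unfolding sec_act_def c_def w_def by simp
      qed
    qed
  qed
  show ?thesis using cS ci nz by blast
qed

theorem proposition5p13:
  fixes G :: "('g, 'b) monoid_scheme" and TG :: "'g topology"
    and X :: "'x topology" and act :: "'g \<Rightarrow> 'x \<Rightarrow> 'x"
    and n :: nat and \<B> :: "'x \<Rightarrow> 'x set set"
    and E :: "('x, 'g, 'e) gsheaf"
    and C I :: "nat \<Rightarrow> ('x, 'g, 'e) gsheaf" and \<delta> q :: "nat \<Rightarrow> 'e \<Rightarrow> 'e"
  assumes "profinite_group G TG"
    and "profinite_space X"
    and "cont_action G TG X act"
    and "cb_deriv X n = {}" and "\<forall>m<n. cb_deriv X m \<noteq> {}"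
    and "\<forall>x\<in>topspace X. \<forall>U\<in>\<B> x. openin X U \<and> x \<in> U \<and> (\<forall>g\<in>stab G act x. act g ` U \<subseteq> U)"
    and "\<forall>x\<in>topspace X. \<forall>W. openin X W \<and> x \<in> W \<longrightarrow> (\<exists>U\<in>\<B> x. U \<subseteq> W)"
    and "gsheaf_iso G E (constQ X act)"
    and "godement_resolution G TG X act E C I \<delta> q"
  shows "\<forall>x\<in>topspace X. \<forall>U\<in>\<B> x. \<forall>i<ht X x.
           \<exists>s\<in>sections X (I i) U.
             (\<forall>g\<in>stab G act x. sec_act G act (I i) g U s = s) \<and>
             s \<notin> sec_map (res_diff \<delta> q i) U ` sections X (res_src C I i) U"
proof -
  note pg = assms(1) and ca = assms(3) and nX = assms(4) and BU = assms(6) and iso = assms(8)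
    and gres = assms(9)
  have gr: "group G" and TG: "topspace TG = carrier G" using pg unfolding profinite_group_def by auto
  have C0: "C 0 = E" and gsE: "is_gsheaf G TG X act E"
    and I0: "\<And>k. is_I0 G TG X act (C k) (I k) (\<delta> k)"
    and CK: "\<And>k. is_cokernel G TG X act (C k) (I k) (\<delta> k) (C (Suc k)) (q k)"
    using gres unfolding godement_resolution_def by auto
  have gsC: "is_gsheaf G TG X act (C k)" for k
  proof (cases k)
    case 0 then show ?thesis using C0 gsE by simp
  next
    case (Suc m) then show ?thesis using CK[of m] unfolding is_cokernel_def by simp
  qed
  have R: "\<forall>x\<in>topspace X. \<forall>U\<in>\<B> x. \<exists>c\<in>sections X (C k) U.
       (\<forall>g\<in>stab G act x. sec_act G act (C k) g U c = c) \<and>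
       (\<forall>y\<in>U \<inter> cb_deriv X k. c y \<noteq> zer (C k) y)" for k
  proof (induction k)
    case 0
    show ?case
    proof (intro ballI)
      fix x U assume x: "x \<in> topspace X" and U: "U \<in> \<B> x"
      have Uo: "openin X U" and inv: "\<forall>h\<in>stab G act x. act h ` U \<subseteq> U" using BU x U by auto
      obtain c where c: "c \<in> sections X E U" "\<forall>g\<in>stab G act x. sec_act G act E g U c = c"
          "\<forall>y\<in>U. c y \<noteq> zer E y"
        using base_case[OF gr TG ca gsE iso x Uo inv] by blast
      show "\<exists>c\<in>sections X (C 0) U.
       (\<forall>g\<in>stab G act x. sec_act G act (C 0) g U c = c) \<and>
       (\<forall>y\<in>U \<inter> cb_deriv X 0. c y \<noteq> zer (C 0) y)"
        using c C0 by auto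
    qed
  next
    case (Suc k)
    show ?case
    proof (intro ballI)
      fix x U assume x: "x \<in> topspace X" and U: "U \<in> \<B> x"
      have Uo: "openin X U" and inv: "\<forall>h\<in>stab G act x. act h ` U \<subseteq> U" using BU x U by auto
      have Ut: "U \<subseteq> topspace X" using Uo by (simp add: openin_subset)
      obtain c where c: "c \<in> sections X (C k) U" "\<forall>g\<in>stab G act x. sec_act G act (C k) g U c = c"
          "\<forall>y\<in>U \<inter> cb_deriv X k. c y \<noteq> zer (C k) y"
        using Suc.IH x U by blast
      obtain s where s: "s \<in> sections X (I k) U" "\<forall>g\<in>stab G act x. sec_act G act (I k) g U s = s"
          "\<forall>y\<in>U \<inter> cb_deriv X (Suc k). q k (s y) \<noteq> zer (C (Suc k)) y"
        using main_step[OF gr TG ca nX gsC I0 CK x Uo inv c] by blast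
      have qm: "gsheaf_mor G (I k) (C (Suc k)) (q k)" using CK[of k] unfolding is_cokernel_def by blast
      define c' where "c' = sec_map (q k) U s"
      have c'S: "c' \<in> sections X (C (Suc k)) U" unfolding c'_def using sec_map_sections[OF qm s(1) Ut] .
      have c'i: "\<forall>g\<in>stab G act x. sec_act G act (C (Suc k)) g U c' = c'"
      proof
        fix g assume g: "g \<in> stab G act x"
        have gc: "g \<in> carrier G" using g unfolding stab_def by auto
        note si = stab_image[OF ca gr x Ut inv g]
        show "sec_act G act (C (Suc k)) g U c' = c'"
        proof
          fix y show "sec_act G act (C (Suc k)) g U c' y = c' y"
          proof (cases "y \<in> U")
            case False then show ?thesis using si(1) unfolding sec_act_def c'_def sec_map_def by simp
          next
            case True
            define w where "w = act (inv\<^bsub>G\<^esub> g) y"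
            have w: "w \<in> U" using si(2) True unfolding w_def by auto
            have sw: "s w \<in> topspace (tot (I k))" using sec_top[OF s(1) w] w Ut by auto
            have "sec_act G act (C (Suc k)) g U c' y = gact (C (Suc k)) g (q k (s w))"
              using True si(1) w unfolding sec_act_def c'_def sec_map_def w_def by simp
            also have "\<dots> = q k (gact (I k) g (s w))" using qm gc sw unfolding gsheaf_mor_def by metis
            also have "\<dots> = q k (sec_act G act (I k) g U s y)"
              using True si(1) unfolding sec_act_def w_def by simp
            also have "\<dots> = c' y" using s(2) g True unfolding c'_def sec_map_def by simp
            finally show ?thesis .
          qed
        qed
      qed
      have c'nz: "\<forall>y\<in>U \<inter> cb_deriv X (Suc k). c' y \<noteq> zer (C (Suc k)) y"
        using s(3) unfolding c'_def sec_map_def by auto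
      show "\<exists>c\<in>sections X (C (Suc k)) U.
       (\<forall>g\<in>stab G act x. sec_act G act (C (Suc k)) g U c = c) \<and>
       (\<forall>y\<in>U \<inter> cb_deriv X (Suc k). c y \<noteq> zer (C (Suc k)) y)"
        using c'S c'i c'nz by blast
    qed
  qed
  show ?thesis
  proof (intro ballI allI impI)
    fix x U i assume x: "x \<in> topspace X" and U: "U \<in> \<B> x" and i: "i < ht X x"
    have Uo: "openin X U" and xU: "x \<in> U" and inv: "\<forall>h\<in>stab G act x. act h ` U \<subseteq> U"
      using BU x U by auto
    have Ut: "U \<subseteq> topspace X" using Uo by (simp add: openin_subset)
    have xi: "x \<in> cb_deriv X (Suc i)" using ht_lemma[OF nX x i] .
    obtain c where c: "c \<in> sections X (C i) U" "\<forall>g\<in>stab G act x. sec_act G act (C i) g U c = c"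
        "\<forall>y\<in>U \<inter> cb_deriv X i. c y \<noteq> zer (C i) y"
      using R[of i] x U by blast
    obtain s where s: "s \<in> sections X (I i) U" "\<forall>g\<in>stab G act x. sec_act G act (I i) g U s = s"
        "\<forall>y\<in>U \<inter> cb_deriv X (Suc i). q i (s y) \<noteq> zer (C (Suc i)) y"
      using main_step[OF gr TG ca nX gsC I0 CK x Uo inv c] by blast
    have notim: "s \<notin> sec_map (res_diff \<delta> q i) U ` sections X (res_src C I i) U"
    proof
      assume "s \<in> sec_map (res_diff \<delta> q i) U ` sections X (res_src C I i) U"
      then obtain r where r: "r \<in> sections X (res_src C I i) U" "s = sec_map (res_diff \<delta> q i) U r"
        by blast
      have rx: "r x \<in> topspace (tot (res_src C I i))" using sec_top[OF r(1) xU] x by simp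
      define e where "e = (if i = 0 then r x else q (i - 1) (r x))"
      have et: "e \<in> topspace (tot (C i))"
      proof (cases i)
        case 0 then show ?thesis using rx unfolding e_def res_src_def by simp
      next
        case (Suc m)
        have "q m ` topspace (tot (I m)) = topspace (tot (C (Suc m)))"
          using CK[of m] unfolding is_cokernel_def by blast
        then show ?thesis using rx Suc unfolding e_def res_src_def by auto
      qed
      have sx: "s x = \<delta> i e" using r(2) xU unfolding sec_map_def res_diff_def e_def by auto
      have st: "s x \<in> topspace (tot (I i))" using sec_top[OF s(1) xU] x by simp
      have sp: "proj (I i) (s x) = x" using sec_proj[OF s(1) xU] .
      have "q i (s x) = zer (C (Suc i)) (proj (I i) (s x))"
        using CK[of i] st et sx unfolding is_cokernel_def by metis
      then show False using s(3) xU xi sp by auto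
    qed
    show "\<exists>s\<in>sections X (I i) U.
             (\<forall>g\<in>stab G act x. sec_act G act (I i) g U s = s) \<and>
             s \<notin> sec_map (res_diff \<delta> q i) U ` sections X (res_src C I i) U"
      using s(1,2) notim by blast
  qed
qed

end
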